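(* Let $\Pi$ be an equitative protocol for a distribution type $\tau$. Then for every run $\rho$ of $\Pi$, every card $c\in\Omega$ and every agent $P\in\mathcal A$, \[\Pr(c\in H_P\mid\rho)=\frac{|\mathrm{Poss}_{c,P}(\rho)|}{|\mathrm{Poss}(\rho)|}.\]
   Context: Let $\mathcal A$ be a finite set of agents listed in speaking order $P_0,\dots,P_m$. A distribution type is a vector $\tau=(\tau_P)_{P\in\mathcal A}$ of positive integers, $|\tau|=\sum_P\tau_P$. The deck $\Omega$ is a set of $|\tau|$ cards; a deal of type $\tau$ is a partition $H=(H_P)_P$ of $\Omega$ with $|H_P|=\tau_P$. Fix a set of tokens; a run is a finite sequence $\rho=a_0,\dots,a_n$ of tokens, $\rho_{<k}=a_0,\dots,a_{k-1}$. A protocol for $\tau$ is a function $\Pi$ assigning to every deal $H$ and run $\rho$ a set of tokens $\Pi(H,\rho)$ such that if $k$ is the remainder of $|\rho|$ modulo $m+1$ and $H_{P_k}=H'_{P_k}$, then $\Pi(H,\rho)=\Pi(H',\rho)$. An execution is a pair $(H,\rho)$ with $a_k\in\Pi(H,\rho_{<k})$ for all $k\le n$; $\rho$ is a run of $\Pi$ if some $(H,\rho)$ is an execution. $\mathrm{Poss}(\rho)$ is the set of deals $H$ with $(H,\rho)$ an execution, and $\mathrm{Poss}_{c,P}(\rho)$ the set of $H\in\mathrm{Poss}(\rho)$ with $c\in H_P$. $\Pi$ is equitative if for every run $\rho$ of $\Pi$ there is $k=k(\rho)$ with $|\Pi(H,\rho)|=k$ for all $H\in\mathrm{Poss}(\rho)$.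 Probability model: a deal $H$ is drawn uniformly at random among all deals of type $\tau$; then, starting from the empty run, while $\Pi(H,\rho)\ne\emptyset$ for the current run $\rho$, a token is drawn uniformly at random from $\Pi(H,\rho)$ and appended. The event "$\rho$" is that the first $|\rho|$ tokens produced are exactly $\rho$. *)

theory Defs
  imports Complex_Main
begin

text \<open>Agents have type 'a and are listed in speaking order by a list ag = [P_0,...,P_m]
  (distinct, nonempty).\<close>

definition is_dist_type :: "'a list \<Rightarrow> 'c set \<Rightarrow> ('a \<Rightarrow> nat) \<Rightarrow> bool" where
  "is_dist_type ag Omega tau \<longleftrightarrow> ag \<noteq> [] \<and> distinct ag \<and> finite Omega \<and>
     (\<forall>P\<in>set ag. tau P > 0) \<and> (\<Sum>P\<in>set ag. tau P) = card Omega"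

definition deals :: "'a list \<Rightarrow> 'c set \<Rightarrow> ('a \<Rightarrow> nat) \<Rightarrow> ('a \<Rightarrow> 'c set) set" where
  "deals ag Omega tau = {H. (\<forall>P\<in>set ag. H P \<subseteq> Omega \<and> card (H P) = tau P) \<and>
     (\<forall>P\<in>set ag. \<forall>Q\<in>set ag. P \<noteq> Q \<longrightarrow> H P \<inter> H Q = {}) \<and>
     (\<Union>P\<in>set ag. H P) = Omega \<and> (\<forall>P. P \<notin> set ag \<longrightarrow> H P = {})}"

text \<open>A protocol: the token set offered depends only on the hand of the agent whose turn it is.
  Token sets are finite (required for uniform drawing).\<close>
definition is_protocol :: "'a list \<Rightarrow> 'c set \<Rightarrow> ('a \<Rightarrow> nat) \<Rightarrow>
    (('a \<Rightarrow> 'c set) \<Rightarrow> 't list \<Rightarrow> 't set) \<Rightarrow> bool" where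
  "is_protocol ag Omega tau Pi \<longleftrightarrow>
     (\<forall>H\<in>deals ag Omega tau. \<forall>rho. finite (Pi H rho)) \<and>
     (\<forall>H\<in>deals ag Omega tau. \<forall>H'\<in>deals ag Omega tau. \<forall>rho.
        H (ag ! (length rho mod length ag)) = H' (ag ! (length rho mod length ag))
        \<longrightarrow> Pi H rho = Pi H' rho)"

definition is_execution :: "(('a \<Rightarrow> 'c set) \<Rightarrow> 't list \<Rightarrow> 't set) \<Rightarrow> ('a \<Rightarrow> 'c set) \<Rightarrow> 't list \<Rightarrow> bool" where
  "is_execution Pi H rho \<longleftrightarrow> (\<forall>k<length rho. rho ! k \<in> Pi H (take k rho))"

definition Poss :: "'a list \<Rightarrow> 'c set \<Rightarrow> ('a \<Rightarrow> nat) \<Rightarrow>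
    (('a \<Rightarrow> 'c set) \<Rightarrow> 't list \<Rightarrow> 't set) \<Rightarrow> 't list \<Rightarrow> ('a \<Rightarrow> 'c set) set" where
  "Poss ag Omega tau Pi rho = {H \<in> deals ag Omega tau. is_execution Pi H rho}"

definition Poss_card :: "'a list \<Rightarrow> 'c set \<Rightarrow> ('a \<Rightarrow> nat) \<Rightarrow>
    (('a \<Rightarrow> 'c set) \<Rightarrow> 't list \<Rightarrow> 't set) \<Rightarrow> 't list \<Rightarrow> 'c \<Rightarrow> 'a \<Rightarrow> ('a \<Rightarrow> 'c set) set" where
  "Poss_card ag Omega tau Pi rho c P = {H \<in> Poss ag Omega tau Pi rho. c \<in> H P}"

definition is_run :: "'a list \<Rightarrow> 'c set \<Rightarrow> ('a \<Rightarrow> nat) \<Rightarrow>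
    (('a \<Rightarrow> 'c set) \<Rightarrow> 't list \<Rightarrow> 't set) \<Rightarrow> 't list \<Rightarrow> bool" where
  "is_run ag Omega tau Pi rho \<longleftrightarrow> Poss ag Omega tau Pi rho \<noteq> {}"

definition equitative :: "'a list \<Rightarrow> 'c set \<Rightarrow> ('a \<Rightarrow> nat) \<Rightarrow>
    (('a \<Rightarrow> 'c set) \<Rightarrow> 't list \<Rightarrow> 't set) \<Rightarrow> bool" where
  "equitative ag Omega tau Pi \<longleftrightarrow>
     (\<forall>rho. is_run ag Omega tau Pi rho \<longrightarrow>
        (\<exists>k. \<forall>H\<in>Poss ag Omega tau Pi rho. card (Pi H rho) = k))"

text \<open>The joint probability that the deal is H and the first |rho| tokens
  produced are exactly rho: (1/#deals) times the product of the uniform drawing probabilities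
  1/|Pi(H, rho_<k)| if (H,rho) is an execution, and 0 otherwise.\<close>
definition joint_prob :: "'a list \<Rightarrow> 'c set \<Rightarrow> ('a \<Rightarrow> nat) \<Rightarrow>
    (('a \<Rightarrow> 'c set) \<Rightarrow> 't list \<Rightarrow> 't set) \<Rightarrow> ('a \<Rightarrow> 'c set) \<Rightarrow> 't list \<Rightarrow> real" where
  "joint_prob ag Omega tau Pi H rho =
     (if H \<in> deals ag Omega tau \<and> is_execution Pi H rho
      then (1 / real (card (deals ag Omega tau))) *
           (\<Prod>k<length rho. 1 / real (card (Pi H (take k rho))))
      else 0)"

definition prob_and_run :: "'a list \<Rightarrow> 'c set \<Rightarrow> ('a \<Rightarrow> nat) \<Rightarrow>
    (('a \<Rightarrow> 'c set) \<Rightarrow> 't list \<Rightarrow> 't set) \<Rightarrow> (('a \<Rightarrow> 'c set) \<Rightarrow> bool) \<Rightarrow> 't list \<Rightarrow> real" where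
  "prob_and_run ag Omega tau Pi E rho =
     (\<Sum>H\<in>{H \<in> deals ag Omega tau. E H}. joint_prob ag Omega tau Pi H rho)"

definition cond_prob :: "'a list \<Rightarrow> 'c set \<Rightarrow> ('a \<Rightarrow> nat) \<Rightarrow>
    (('a \<Rightarrow> 'c set) \<Rightarrow> 't list \<Rightarrow> 't set) \<Rightarrow> (('a \<Rightarrow> 'c set) \<Rightarrow> bool) \<Rightarrow> 't list \<Rightarrow> real" where
  "cond_prob ag Omega tau Pi E rho =
     prob_and_run ag Omega tau Pi E rho / prob_and_run ag Omega tau Pi (\<lambda>_. True) rho"

end

theory Submission
  imports Defs "HOL-Library.FuncSet"
begin

lemma exec_take:
  assumes "is_execution Q H rho"
  shows "is_execution Q H (take k rho)"
  using assms unfolding is_execution_def by (simp add: min_def)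

lemma deals_finite:
  assumes "finite Omega"
  shows "finite (deals ag Omega tau)"
proof -
  have sub: "deals ag Omega tau \<subseteq> {H. (\<forall>P\<in>set ag. H P \<in> Pow Omega) \<and> (\<forall>P. P \<notin> set ag \<longrightarrow> H P = {})}"
    unfolding deals_def by auto
  have "finite {H. (\<forall>P\<in>set ag. H P \<in> Pow Omega) \<and> (\<forall>P. P \<notin> set ag \<longrightarrow> H P = {})}"
  proof (rule finite_imageD)
    let ?A = "{H. (\<forall>P\<in>set ag. H P \<in> Pow Omega) \<and> (\<forall>P. P \<notin> set ag \<longrightarrow> H P = {})}"
    show "inj_on (\<lambda>H. restrict H (set ag)) ?A"
      unfolding inj_on_def restrict_def fun_eq_iff by (metis (mono_tags, lifting) mem_Collect_eq)
    have "(\<lambda>H. restrict H (set ag)) ` ?A \<subseteq> PiE (set ag) (\<lambda>_. Pow Omega)" by fastforce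
    moreover have "finite (PiE (set ag) (\<lambda>_. Pow Omega))" using assms by (simp add: finite_PiE)
    ultimately show "finite ((\<lambda>H. restrict H (set ag)) ` ?A)" using finite_subset by blast
  qed
  then show ?thesis using sub finite_subset by blast
qed

theorem mainTheorem4:
  fixes ag :: "'a list" and Omega :: "'c set" and tau :: "'a \<Rightarrow> nat"
    and Pi :: "('a \<Rightarrow> 'c set) \<Rightarrow> 't list \<Rightarrow> 't set"
    and rho :: "'t list" and c :: 'c and P :: 'a
  assumes "is_dist_type ag Omega tau"
    and "is_protocol ag Omega tau Pi"
    and "equitative ag Omega tau Pi"
    and "is_run ag Omega tau Pi rho"
    and "c \<in> Omega"
    and "P \<in> set ag"
  shows "cond_prob ag Omega tau Pi (\<lambda>H. c \<in> H P) rho =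
         real (card (Poss_card ag Omega tau Pi rho c P)) / real (card (Poss ag Omega tau Pi rho))"
proof -
  define D where "D = deals ag Omega tau"
  define S where "S = Poss ag Omega tau Pi rho"
  have finD: "finite D" using assms(1) deals_finite unfolding D_def is_dist_type_def by blast
  have SD: "S \<subseteq> D" unfolding S_def D_def Poss_def by auto
  have finS: "finite S" using finD SD finite_subset by blast
  obtain H0 where H0: "H0 \<in> S" using assms(4) unfolding is_run_def S_def by blast
  define C where "C = joint_prob ag Omega tau Pi H0 rho"
  have cardeq: "card (Pi H (take k rho)) = card (Pi H0 (take k rho))"
    if "H \<in> S" "k < length rho" for H k
  proof -
    have "H \<in> Poss ag Omega tau Pi (take k rho)" "H0 \<in> Poss ag Omega tau Pi (take k rho)"
      using that H0 exec_take unfolding S_def Poss_def by blast+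
    moreover then have "is_run ag Omega tau Pi (take k rho)" unfolding is_run_def by blast
    then obtain m where "\<forall>H\<in>Poss ag Omega tau Pi (take k rho). card (Pi H (take k rho)) = m"
      using assms(3) unfolding equitative_def by blast
    ultimately show ?thesis by simp
  qed
  have jp: "joint_prob ag Omega tau Pi H rho = (if H \<in> S then C else 0)" for H
  proof (cases "H \<in> S")
    case True
    then have "(\<Prod>k<length rho. 1 / real (card (Pi H (take k rho)))) =
               (\<Prod>k<length rho. 1 / real (card (Pi H0 (take k rho))))"
      using cardeq by (intro prod.cong) auto
    then show ?thesis using True H0 unfolding C_def joint_prob_def S_def Poss_def by auto
  next
    case False
    then show ?thesis unfolding joint_prob_def S_def Poss_def by auto
  qed
  have Cpos: "C \<noteq> 0"
  proof -
    have "H0 \<in> D" using H0 SD by blast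
    then have "card D > 0" using finD card_gt_0_iff by blast
    moreover have "card (Pi H0 (take k rho)) > 0" if "k < length rho" for k
    proof -
      have ex: "is_execution Pi H0 rho" using H0 unfolding S_def Poss_def by auto
      have "rho ! k \<in> Pi H0 (take k rho)" using ex that unfolding is_execution_def by auto
      moreover have "finite (Pi H0 (take k rho))" using assms(2) \<open>H0 \<in> D\<close>
        unfolding is_protocol_def D_def by blast
      ultimately show ?thesis using card_gt_0_iff by blast
    qed
    ultimately show ?thesis using H0 unfolding C_def joint_prob_def S_def Poss_def D_def
      by (auto simp: prod_zero_iff)
  qed
  have par: "prob_and_run ag Omega tau Pi E rho = C * real (card {H \<in> S. E H})" for E
  proof -
    have "prob_and_run ag Omega tau Pi E rho = (\<Sum>H\<in>{H \<in> D. E H}. if H \<in> S then C else 0)"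
      unfolding prob_and_run_def D_def using jp by simp
    also have "\<dots> = (\<Sum>H\<in>{H \<in> D. E H} \<inter> S. C)"
      using finD by (simp add: sum.If_cases)
    also have "{H \<in> D. E H} \<inter> S = {H \<in> S. E H}" using SD by blast
    finally show ?thesis by simp
  qed
  have "Poss_card ag Omega tau Pi rho c P = {H \<in> S. c \<in> H P}"
    unfolding Poss_card_def S_def by simp
  moreover have "{H \<in> S. True} = S" by simp
  ultimately show ?thesis unfolding cond_prob_def par S_def[symmetric] using Cpos by simp
qed

end
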